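(* Let $\rho$ be a $d$-dimensional state that is diagonally dominant, i.e. $\rho_{ii}\ge\sum_{j\ne i}|\rho_{ij}|$ for all $i=1,\dots,d$. Then $\rho\in\mathrm{co}(\mathcal U)$. Consequently, every $d$-dimensional state $\rho$ with $\|\rho-\mathbb 1/d\|_{1\to1}\le1/d$ belongs to $\mathrm{co}(\mathcal U)$, where $\|X\|_{1\to1}=\max_{1\le i\le d}\sum_{j=1}^d|X_{ij}|$.
   Context: Fixed computational basis $\{|i\rangle\}_{i=1}^d$. $\mathcal U_k$ is the set of uniformly coherent states $|\Psi\rangle=k^{-1/2}\sum_{j\in J}e^{i\theta_j}|j\rangle$, $|J|=k$, $\theta_j\in\mathbb R$; $\mathcal U=\bigcup_{k=1}^d\mathcal U_k$ (as density matrices), and $\mathrm{co}(\mathcal U)$ its convex hull. *)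

theory Defs
  imports "HOL-Analysis.Analysis"
begin

text \<open>Dimension d = CARD('n); computational basis indexed by the finite type 'n.
  Matrices are complex^'n^'n, with X $ i $ j the (i,j) entry.\<close>

definition hermitian :: "complex^'n^'n \<Rightarrow> bool" where
  "hermitian A \<longleftrightarrow> (\<forall>i j. A $ i $ j = cnj (A $ j $ i))"

definition psd :: "complex^'n::finite^'n \<Rightarrow> bool" where
  "psd A \<longleftrightarrow> hermitian A \<and>
     (\<forall>v :: complex^'n. 0 \<le> Re (\<Sum>i\<in>UNIV. \<Sum>j\<in>UNIV. cnj (v $ i) * A $ i $ j * v $ j))"

definition mtrace :: "complex^'n::finite^'n \<Rightarrow> complex" where
  "mtrace A = (\<Sum>i\<in>UNIV. A $ i $ i)"

definition is_state :: "complex^'n::finite^'n \<Rightarrow> bool" where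
  "is_state A \<longleftrightarrow> psd A \<and> mtrace A = 1"

definition proj :: "complex^'n \<Rightarrow> complex^'n^'n" where
  "proj v = (\<chi> i j. v $ i * cnj (v $ j))"

definition uc_vec :: "'n::finite set \<Rightarrow> ('n \<Rightarrow> real) \<Rightarrow> complex^'n" where
  "uc_vec J \<theta> = (\<chi> i. if i \<in> J then exp (\<i> * of_real (\<theta> i)) / of_real (sqrt (real (card J))) else 0)"

text \<open>U_k and U = union over k = 1..d, as density matrices.\<close>
definition UC_k :: "nat \<Rightarrow> (complex^'n::finite^'n) set" where
  "UC_k k = {proj (uc_vec J \<theta>) | J \<theta>. card J = k}"

definition UC :: "(complex^'n::finite^'n) set" where
  "UC = (\<Union>k\<in>{1..CARD('n)}. UC_k k)"

definition diag_dominant :: "complex^'n::finite^'n \<Rightarrow> bool" where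
  "diag_dominant A \<longleftrightarrow> (\<forall>i. Re (A $ i $ i) \<ge> (\<Sum>j\<in>UNIV - {i}. norm (A $ i $ j)))"

definition norm11 :: "complex^'n::finite^'n \<Rightarrow> real" where
  "norm11 X = Max (range (\<lambda>i. \<Sum>j\<in>UNIV. norm (X $ i $ j)))"

end

theory Submission imports Defs begin

lemma sqrt2_sq: "complex_of_real (sqrt 2) * complex_of_real (sqrt 2) = 2"
proof -
  have s0: "sqrt 2 * sqrt 2 = (2::real)" by simp
  show ?thesis unfolding of_real_mult[symmetric] s0 by simp
qed

lemma key_div2: "x / complex_of_real (sqrt 2) * cnj (y / complex_of_real (sqrt 2)) = x * cnj y / 2"
proof -
  have s0: "sqrt 2 * sqrt 2 = (2::real)" by simp
  have s: "complex_of_real (sqrt 2) * complex_of_real (sqrt 2) = 2"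
    unfolding of_real_mult[symmetric] s0 by simp
  have "x / complex_of_real (sqrt 2) * cnj (y / complex_of_real (sqrt 2))
      = x * cnj y / (complex_of_real (sqrt 2) * complex_of_real (sqrt 2))"
    by (simp only: complex_cnj_divide complex_cnj_complex_of_real times_divide_times_eq)
  then show ?thesis by (simp only: s)
qed

lemma proj_pair:
  assumes "i \<noteq> j"
  shows "proj (uc_vec {i,j} \<theta>) $ a $ b =
    (if a \<in> {i,j} \<and> b \<in> {i,j} then exp (\<i> * of_real (\<theta> a)) * cnj (exp (\<i> * of_real (\<theta> b))) / 2 else 0)"
proof -
  have c: "real (card {i,j}) = 2" using assms by simp
  show ?thesis unfolding proj_def uc_vec_def vec_lambda_beta c
    by (simp add: key_div2 sqrt2_sq)
qed

lemma proj_single: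
  "proj (uc_vec {i} \<theta>) $ a $ b = (if a = i \<and> b = i then 1 else 0)"
proof -
  have "exp (\<i> * of_real x) * cnj (exp (\<i> * of_real x)) = 1" for x :: real
    using complex_norm_square[of "exp (\<i> * complex_of_real x)"] by (simp add: norm_exp_i_times)
  then show ?thesis unfolding proj_def uc_vec_def by auto
qed

lemma arg_mult: "complex_of_real (norm z) * exp (\<i> * complex_of_real (Arg z)) = z"
  by (cases "z = 0") (auto dest: Arg_eq[symmetric])

lemma arg_mult_cnj: "complex_of_real (norm z) * cnj (exp (\<i> * complex_of_real (Arg z))) = cnj z"
proof -
  have "cnj (complex_of_real (norm z) * exp (\<i> * complex_of_real (Arg z))) = cnj z" using arg_mult[of z] by simp
  then show ?thesis by (simp only: complex_cnj_mult complex_cnj_complex_of_real)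
qed

lemma exp_cnj_one: "exp (\<i> * complex_of_real x) * cnj (exp (\<i> * complex_of_real x)) = 1"
  using complex_norm_square[of "exp (\<i> * complex_of_real x)"] by (simp add: norm_exp_i_times)

lemma single_in_UC: "proj (uc_vec {i} \<theta>) \<in> (UC :: (complex^'n::finite^'n) set)"
proof -
  have "CARD('n) \<ge> 1" by (simp add: Suc_leI)
  moreover have "proj (uc_vec {i} \<theta>) \<in> UC_k 1" unfolding UC_k_def
    by (rule CollectI, rule exI[of _ "{i}"], rule exI[of _ \<theta>]) simp
  ultimately show ?thesis unfolding UC_def by auto
qed

lemma pair_in_UC:
  fixes i j :: "'n::finite"
  assumes "i \<noteq> j"
  shows "proj (uc_vec {i,j} \<theta>) \<in> (UC :: (complex^'n::finite^'n) set)"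
proof -
  have "card {i,j} \<le> CARD('n)" by (rule card_mono) auto
  moreover have "card {i,j} = 2" using assms by simp
  moreover have "proj (uc_vec {i,j} \<theta>) \<in> UC_k 2" unfolding UC_k_def
    using assms by (intro CollectI exI[of _ "{i,j}"] exI[of _ \<theta>]) simp
  ultimately show ?thesis unfolding UC_def by auto
qed

lemma dsum: "(\<Sum>i\<in>UNIV. \<Sum>j\<in>UNIV. w (i,j)) = sum w (UNIV::('n::finite \<times> 'm::finite) set)"
  by (simp add: sum.cartesian_product UNIV_Times_UNIV)

lemma scaleR_entry: "(c *\<^sub>R M) $ a $ b = complex_of_real c * M $ a $ b"
  for M :: "complex^'n^'m"
  by (simp only: vector_scaleR_component) (simp add: scaleR_conv_of_real)

lemma dd1: "(\<Sum>i\<in>(UNIV::'n::finite set). \<Sum>j\<in>(UNIV::'m::finite set). if i = a \<and> j = b then c else (0::'c::comm_monoid_add)) = c"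
proof -
  have "(\<Sum>i\<in>(UNIV::'n set). \<Sum>j\<in>(UNIV::'m set). if i = a \<and> j = b then c else 0)
     = (\<Sum>i\<in>(UNIV::'n set). if i = a then (\<Sum>j\<in>(UNIV::'m set). if j = b then c else 0) else 0)"
    by (rule sum.cong) auto
  then show ?thesis by simp
qed
lemma dd2: "(\<Sum>i\<in>(UNIV::'n::finite set). \<Sum>j\<in>(UNIV::'n set). if i = a \<and> j \<noteq> a then f j else (0::'c::comm_monoid_add)) = (\<Sum>j\<in>UNIV-{a}. f j)"
proof -
  have "(\<Sum>i\<in>(UNIV::'n set). \<Sum>j\<in>(UNIV::'n set). if i = a \<and> j \<noteq> a then f j else 0)
     = (\<Sum>i\<in>(UNIV::'n set). if i = a then (\<Sum>j\<in>(UNIV::'n set). if j \<noteq> a then f j else 0) else 0)"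
    by (rule sum.cong) auto
  also have "\<dots> = (\<Sum>j\<in>(UNIV::'n set). if j \<noteq> a then f j else 0)" by simp
  also have "\<dots> = (\<Sum>j\<in>UNIV-{a}. f j)" by (simp add: sum.If_cases Diff_eq Compl_eq)
  finally show ?thesis .
qed
lemma dd3: "(\<Sum>i\<in>(UNIV::'n::finite set). \<Sum>j\<in>(UNIV::'n set). if j = a \<and> i \<noteq> a then f i else (0::'c::comm_monoid_add)) = (\<Sum>i\<in>UNIV-{a}. f i)"
proof -
  have "(\<Sum>i\<in>(UNIV::'n set). \<Sum>j\<in>(UNIV::'n set). if j = a \<and> i \<noteq> a then f i else 0)
     = (\<Sum>i\<in>(UNIV::'n set). if i \<noteq> a then f i else 0)"
    by (rule sum.cong) auto
  also have "\<dots> = (\<Sum>j\<in>UNIV-{a}. f j)" by (simp add: sum.If_cases Diff_eq Compl_eq)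
  finally show ?thesis .
qed

lemma dd_in_hull:
  fixes \<rho> :: "complex^'n::finite^'n"
  assumes herm: "hermitian \<rho>" and tr: "mtrace \<rho> = 1" and dd: "diag_dominant \<rho>"
  shows "\<rho> \<in> convex hull UC"
proof -
  define S where "S i = (\<Sum>k\<in>UNIV-{i}. norm (\<rho>$i$k))" for i
  define w where "w = (\<lambda>(i,j). if i = j then Re (\<rho>$i$i) - S i else norm (\<rho>$i$j))"
  define X where "X = (\<lambda>(i::'n,j). if i = j then proj (uc_vec {i} (\<lambda>_. 0))
      else proj (uc_vec {i,j} (\<lambda>k. if k = i then Arg (\<rho>$i$j) else 0)))"
  have herm': "\<rho>$j$i = cnj (\<rho>$i$j)" for i j using herm unfolding hermitian_def by blast
  have real_diag: "\<rho>$i$i = complex_of_real (Re (\<rho>$i$i))" for i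
    using herm'[of i i] by (simp add: complex_eq_iff)
  have mem: "X p \<in> UC" for p
    by (cases p) (auto simp: X_def single_in_UC pair_in_UC)
  have wpos: "w p \<ge> 0" for p
    using dd by (cases p) (auto simp: w_def S_def diag_dominant_def)
  have wsum: "sum w UNIV = 1"
  proof -
    have "sum w UNIV = (\<Sum>i\<in>UNIV. \<Sum>j\<in>UNIV. w (i,j))"
      by (rule dsum[symmetric])
    also have "\<dots> = (\<Sum>i\<in>UNIV. Re (\<rho>$i$i))"
    proof (rule sum.cong[OF refl])
      fix i
      have "(\<Sum>j\<in>UNIV. w (i,j)) = w (i,i) + (\<Sum>j\<in>UNIV-{i}. w (i,j))"
        by (simp add: sum.remove)
      also have "(\<Sum>j\<in>UNIV-{i}. w (i,j)) = S i"
        unfolding S_def by (rule sum.cong) (auto simp: w_def)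
      finally show "(\<Sum>j\<in>UNIV. w (i,j)) = Re (\<rho>$i$i)" by (simp add: w_def)
    qed
    also have "\<dots> = Re (mtrace \<rho>)" by (simp add: mtrace_def)
    finally show ?thesis using tr by simp
  qed
  have eq: "\<rho> = (\<Sum>p\<in>UNIV. w p *\<^sub>R X p)"
  proof (rule vec_eq_iff[THEN iffD2], intro allI, rule vec_eq_iff[THEN iffD2], intro allI)
    fix a b
    define g where "g i j = complex_of_real (w (i,j)) * X (i,j) $ a $ b" for i j
    have "(\<Sum>p\<in>UNIV. w p *\<^sub>R X p) $ a $ b = (\<Sum>p\<in>UNIV. complex_of_real (w p) * X p $ a $ b)"
      by (simp only: sum_component scaleR_entry)
    also have "\<dots> = (\<Sum>i\<in>UNIV. \<Sum>j\<in>UNIV. g i j)"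
      using dsum[of "\<lambda>p. complex_of_real (w p) * X p $ a $ b"] by (simp add: g_def)
    also have "\<dots> = \<rho> $ a $ b"
    proof (cases "a = b")
      case False
      have gf: "g i j = (if i = a \<and> j = b then \<rho>$a$b/2 else 0) + (if i = b \<and> j = a then \<rho>$a$b/2 else 0)" for i j
      proof (cases "i = j")
        case True then show ?thesis using False by (auto simp: g_def X_def proj_single)
      next
        case ij: False
        show ?thesis
          using False ij arg_mult[of "\<rho>$a$b"] arg_mult_cnj[of "\<rho>$b$a"] herm'[of a b]
          by (auto simp: g_def X_def w_def proj_pair)
      qed
      have "(\<Sum>i\<in>UNIV. \<Sum>j\<in>UNIV. g i j) = (\<Sum>i\<in>UNIV. \<Sum>j\<in>UNIV. if i = a \<and> j = b then \<rho>$a$b/2 else 0)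
          + (\<Sum>i\<in>UNIV. \<Sum>j\<in>UNIV. if i = b \<and> j = a then \<rho>$a$b/2 else 0)"
        by (simp only: gf sum.distrib)
      also have "\<dots> = \<rho>$a$b/2 + \<rho>$a$b/2" by (simp only: dd1)
      finally have "(\<Sum>i\<in>UNIV. \<Sum>j\<in>UNIV. g i j) = \<rho>$a$b/2 + \<rho>$a$b/2" .
      then show ?thesis by simp
    next
      case True
      have gf: "g i j = (if i = a \<and> j = a then complex_of_real (Re (\<rho>$a$a) - S a) else 0)
          + (if i = a \<and> j \<noteq> a then complex_of_real (norm (\<rho>$a$j)) / 2 else 0)
          + (if j = a \<and> i \<noteq> a then complex_of_real (norm (\<rho>$a$i)) / 2 else 0)" for i j
      proof (cases "i = j")
        case True then show ?thesis using \<open>a = b\<close> by (auto simp: g_def X_def proj_single w_def)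
      next
        case ij: False
        show ?thesis
          using \<open>a = b\<close> ij exp_cnj_one herm'[of a i]
          by (auto simp: g_def X_def w_def proj_pair)
      qed
      have "(\<Sum>i\<in>UNIV. \<Sum>j\<in>UNIV. g i j) = complex_of_real (Re (\<rho>$a$a) - S a)
          + (\<Sum>j\<in>UNIV-{a}. complex_of_real (norm (\<rho>$a$j)) / 2)
          + (\<Sum>i\<in>UNIV-{a}. complex_of_real (norm (\<rho>$a$i)) / 2)"
        by (simp only: gf sum.distrib dd1 dd2 dd3)
      also have "\<dots> = complex_of_real (Re (\<rho>$a$a))"
      proof -
        have "(\<Sum>j\<in>UNIV-{a}. complex_of_real (norm (\<rho>$a$j)) / 2) = complex_of_real (S a) / 2"
          by (simp add: S_def sum_divide_distrib)
        then show ?thesis by (simp add: of_real_diff mult.commute)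
      qed
      finally show ?thesis using True real_diag[of a] by simp
    qed
    finally show "\<rho> $ a $ b = (\<Sum>p\<in>UNIV. w p *\<^sub>R X p) $ a $ b" by simp
  qed
  show ?thesis
    unfolding eq
    by (rule convex_sum) (auto simp: wsum wpos mem hull_subset[THEN subsetD] convex_convex_hull)
qed

lemma norm11_dd:
  fixes \<rho> :: "complex^'n::finite^'n"
  assumes h: "norm11 (\<rho> - mat (1 / of_nat CARD('n))) \<le> 1 / real CARD('n)"
  shows "diag_dominant \<rho>"
  unfolding diag_dominant_def
proof
  fix i
  define c :: complex where "c = 1 / of_nat CARD('n)"
  have row: "(\<Sum>j\<in>UNIV. norm ((\<rho> - mat c) $ i $ j)) \<le> 1 / real CARD('n)"
  proof -
    let ?f = "\<lambda>i. \<Sum>j\<in>UNIV. norm ((\<rho> - mat c) $ i $ j)"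
    have "?f i \<le> Max (range ?f)" by (rule Max_ge) auto
    then show ?thesis using h unfolding norm11_def c_def by linarith
  qed
  have "(\<Sum>j\<in>UNIV. norm ((\<rho> - mat c) $ i $ j))
      = norm ((\<rho> - mat c) $ i $ i) + (\<Sum>j\<in>UNIV-{i}. norm ((\<rho> - mat c) $ i $ j))"
    by (simp add: sum.remove)
  also have "(\<Sum>j\<in>UNIV-{i}. norm ((\<rho> - mat c) $ i $ j)) = (\<Sum>j\<in>UNIV-{i}. norm (\<rho> $ i $ j))"
    by (rule sum.cong) (auto simp: mat_def)
  also have "norm ((\<rho> - mat c) $ i $ i) = norm (\<rho> $ i $ i - c)"
    by (simp add: mat_def)
  finally have r2: "norm (\<rho> $ i $ i - c) + (\<Sum>j\<in>UNIV-{i}. norm (\<rho> $ i $ j)) \<le> 1 / real CARD('n)"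
    using row by simp
  have rc: "Re c = 1 / real CARD('n)" 
  proof -
    have "c = complex_of_real (1 / real CARD('n))" unfolding c_def by simp
    then show ?thesis by simp
  qed
  have "Re c - Re (\<rho> $ i $ i) \<le> norm (\<rho> $ i $ i - c)"
    using abs_Re_le_cmod[of "\<rho> $ i $ i - c"] by simp
  then show "(\<Sum>j\<in>UNIV-{i}. norm (\<rho> $ i $ j)) \<le> Re (\<rho> $ i $ i)"
    using r2 rc by linarith
qed

theorem lemma13:
  shows "(\<forall>\<rho> :: complex^'n::finite^'n. is_state \<rho> \<and> diag_dominant \<rho> \<longrightarrow> \<rho> \<in> convex hull UC)
       \<and> (\<forall>\<rho> :: complex^'n::finite^'n. is_state \<rho> \<and>
            norm11 (\<rho> - mat (1 / of_nat CARD('n))) \<le> 1 / real CARD('n) \<longrightarrow> \<rho> \<in> convex hull UC)"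
  using dd_in_hull norm11_dd unfolding is_state_def psd_def by blast

end
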